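(* Suppose the standing assumption and Assumption (B) hold. For $c=(c_1,\dots,c_I)$ near $0$ let $f_0(x) = A\exp(\kappa x + \zeta x^2 + \sum_{i=1}^I a_i K_i(x))$, where $(A,\kappa,\zeta,a_1,\dots,a_I)$ are the parameters (depending on $c$) such that $f_0$ is a probability density with mean $0$, variance $1$ and $\int f_0 K_i = c_i$ for all $i$, namely the continuously differentiable solution branch with $(A,\kappa,\zeta,a)\to(1/\sqrt{2\pi},0,-1/2,0)$ as $c\to 0$. Let $\hat f_0(x) := \varphi(x)\bigl(1+\sum_{i=1}^I c_iK_i(x)\bigr)$. Then for every $\delta<1/2$, $$\sup_{x\in\mathbb{R}}\bigl|e^{\delta x^2}\bigl(f_0(x) - \hat f_0(x)\bigr)\bigr| = \mathcal{O}(\|c\|^2)\quad\text{as } c\to 0.$$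
   Context: $\varphi$ denotes the standard normal density. Standing assumption: $G_1,\dots,G_I:\mathbb{R}\to\mathbb{R}$ grow no faster than quadratically (so there are constants $B_i>0$ with $|K_i(x)|\le B_i(1+x^2)$), and $K_i(x) := (G_i(x) + \alpha_i x^2 + \beta_i x + \gamma_i)/\delta_i$ with real constants chosen such that $\int K_i K_j \varphi\,dx = \mathbb{1}_{\{i=j\}}$ and $\int K_i(x) x^k\varphi(x)\,dx = 0$ for $k=0,1,2$ and all $i,j$. Assumption (B): writing $K(x) = (K_1(x),\dots,K_I(x))$, there is $\varepsilon>0$ such that $h^\top K(x)\ge -1/2$ for all $x\in\mathbb{R}$ and all $h\in\mathbb{R}^I$ with $h^\top h<\varepsilon$; and there is $M:\mathbb{R}\to\mathbb{R}$ with $\sum_{i,j,k=1}^I|K_i(x)K_j(x)K_k(x)|\le M(x)$ for all $x$ and $\tilde M := \int\varphi(x) M(x)\,dx<\infty$. $\|\cdot\|$ is the Euclidean norm. *)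

theory Defs
  imports "HOL-Probability.Probability"
begin

definition expfam ::
  "real \<Rightarrow> real \<Rightarrow> real \<Rightarrow> real^'i::finite \<Rightarrow> ('i \<Rightarrow> real \<Rightarrow> real) \<Rightarrow> real \<Rightarrow> real" where
  "expfam A \<kappa> \<zeta> a K x = A * exp (\<kappa> * x + \<zeta> * x\<^sup>2 + (\<Sum>i\<in>UNIV. a $ i * K i x))"

definition expfam_lin :: "real^'i::finite \<Rightarrow> ('i \<Rightarrow> real \<Rightarrow> real) \<Rightarrow> real \<Rightarrow> real" where
  "expfam_lin c K x = std_normal_density x * (1 + (\<Sum>i\<in>UNIV. c $ i * K i x))"

end

theory Submission
  imports Defs
begin

lemma exp_taylor2_bound:
  fixes v :: real
  shows "\<bar>exp v - 1 - v\<bar> \<le> v\<^sup>2 * exp \<bar>v\<bar> / 2"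
proof -
  obtain t where t: "\<bar>t\<bar> \<le> \<bar>v\<bar>" "exp v = (\<Sum>m<2. (v ^ m) / fact m) + (exp t / fact 2) * v ^ 2"
    using Maclaurin_exp_le[of v 2] by blast
  have eq: "exp v - 1 - v = exp t * v\<^sup>2 / 2" using t(2) by (simp add: numeral_2_eq_2)
  have "\<bar>exp v - 1 - v\<bar> = exp t * v\<^sup>2 / 2" unfolding eq by simp
  also have "\<dots> \<le> exp \<bar>v\<bar> * v\<^sup>2 / 2"
    using t(1) by (intro divide_right_mono mult_right_mono) auto
  finally show ?thesis by (simp add: mult.commute)
qed

lemma poly_exp_bound:
  fixes x b :: real and n :: nat
  assumes b: "b > 0"
  shows "(1 + x\<^sup>2) ^ n \<le> (max 1 (n / b)) ^ n * exp (b * x\<^sup>2)"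
proof (cases "n = 0")
  case True then show ?thesis using b by simp
next
  case False
  let ?m = "max 1 (real n / b)"
  have "1 + x\<^sup>2 \<le> ?m * (1 + b * x\<^sup>2 / n)"
  proof -
    have "?m * (1 + b * x\<^sup>2 / n) = ?m + ?m * (b / n) * x\<^sup>2" by (simp add: algebra_simps)
    moreover have "?m * (b / n) \<ge> 1"
      using b False by (auto simp: field_simps max_def)
    moreover have "x\<^sup>2 \<ge> 0" by simp
    ultimately show ?thesis
      by (smt (verit) max.cobounded1 mult_le_cancel_right1)
  qed
  then have "(1 + x\<^sup>2) ^ n \<le> (?m * (1 + b * x\<^sup>2 / n)) ^ n"
    by (intro power_mono) auto
  also have "\<dots> = ?m ^ n * (1 + b * x\<^sup>2 / n) ^ n" by (simp add: power_mult_distrib)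
  also have "(1 + b * x\<^sup>2 / n) ^ n \<le> exp (b * x\<^sup>2 / n) ^ n"
    by (intro power_mono) (use b in auto)
  also have "exp (b * x\<^sup>2 / n) ^ n = exp (b * x\<^sup>2)"
    using False by (simp add: exp_of_nat_mult[symmetric])
  finally show ?thesis by (simp add: mult_left_mono)
qed

lemma integrable_weighted:
  fixes f :: "real \<Rightarrow> real"
  assumes f: "f \<in> borel_measurable borel" and eta: "\<eta> < 1/2"
    and bnd: "\<And>x. \<bar>f x\<bar> \<le> C * (1 + x\<^sup>2) ^ n * exp (\<eta> * x\<^sup>2)"
  shows "integrable lborel (\<lambda>x. std_normal_density x * f x)"
proof -
  define b where "b = (1/2 - \<eta>) / 2"
  have b: "b > 0" using eta by (simp add: b_def)
  define \<sigma> where "\<sigma> = sqrt (1 / (2 * b))"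
  have \<sigma>: "\<sigma> > 0" using b by (simp add: \<sigma>_def)
  have s2: "2 * \<sigma>\<^sup>2 = 1 / b" using b by (simp add: \<sigma>_def)
  define Mb where "Mb = (max 1 (n / b)) ^ n"
  have nd: "normal_density 0 \<sigma> x = 1 / sqrt (2 * pi * \<sigma>\<^sup>2) * exp (- b * x\<^sup>2)" for x
  proof -
    have "x\<^sup>2 / (2 * \<sigma>\<^sup>2) = b * x\<^sup>2" using b by (simp add: s2)
    then show ?thesis unfolding normal_density_def by simp
  qed
  have "integrable lborel (\<lambda>x. (\<bar>C\<bar> * Mb / sqrt (2*pi) * sqrt (2 * pi * \<sigma>\<^sup>2)) * normal_density 0 \<sigma> x)"
    by (rule integrable_mult_right) (rule integrable_normal_density, rule \<sigma>)
  then show ?thesis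
  proof (rule Bochner_Integration.integrable_bound[where g="\<lambda>x. std_normal_density x * f x"])
    show "(\<lambda>x. std_normal_density x * f x) \<in> borel_measurable lborel" using f by simp
    show "AE x in lborel. norm (std_normal_density x * f x)
       \<le> norm ((\<bar>C\<bar> * Mb / sqrt (2*pi) * sqrt (2 * pi * \<sigma>\<^sup>2)) * normal_density 0 \<sigma> x)"
    proof (rule AE_I2)
      fix x
      have p: "(1 + x\<^sup>2) ^ n \<le> Mb * exp (b * x\<^sup>2)" unfolding Mb_def by (rule poly_exp_bound[OF b])
      have "norm (std_normal_density x * f x) = std_normal_density x * \<bar>f x\<bar>"
        by (simp add: abs_mult)
      also have "\<dots> \<le> std_normal_density x * (\<bar>C\<bar> * (1 + x\<^sup>2) ^ n * exp (\<eta> * x\<^sup>2))"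
      proof (intro mult_left_mono)
        have "C * (1 + x\<^sup>2) ^ n * exp (\<eta> * x\<^sup>2) \<le> \<bar>C\<bar> * (1 + x\<^sup>2) ^ n * exp (\<eta> * x\<^sup>2)"
          by (intro mult_right_mono) auto
        then show "\<bar>f x\<bar> \<le> \<bar>C\<bar> * (1 + x\<^sup>2) ^ n * exp (\<eta> * x\<^sup>2)" using bnd[of x] by linarith
      qed simp
      also have "\<dots> \<le> std_normal_density x * (\<bar>C\<bar> * (Mb * exp (b * x\<^sup>2)) * exp (\<eta> * x\<^sup>2))"
        by (intro mult_left_mono mult_right_mono p) auto
      also have "\<dots> = \<bar>C\<bar> * Mb / sqrt (2*pi) * (exp (- x\<^sup>2 / 2) * exp (b * x\<^sup>2) * exp (\<eta> * x\<^sup>2))"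
        by (simp add: std_normal_density_def)
      also have "exp (- x\<^sup>2 / 2) * exp (b * x\<^sup>2) * exp (\<eta> * x\<^sup>2) = exp (- x\<^sup>2 / 2 + b * x\<^sup>2 + \<eta> * x\<^sup>2)"
        by (simp only: exp_add)
      also have "- x\<^sup>2 / 2 + b * x\<^sup>2 + \<eta> * x\<^sup>2 = - b * x\<^sup>2" by (simp add: b_def algebra_simps)
      also have "\<bar>C\<bar> * Mb / sqrt (2*pi) * exp (- b * x\<^sup>2)
          = (\<bar>C\<bar> * Mb / sqrt (2*pi) * sqrt (2 * pi * \<sigma>\<^sup>2)) * normal_density 0 \<sigma> x"
        using \<sigma> by (simp add: nd)
      also have "\<dots> \<le> norm ((\<bar>C\<bar> * Mb / sqrt (2*pi) * sqrt (2 * pi * \<sigma>\<^sup>2)) * normal_density 0 \<sigma> x)"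
        by (metis abs_ge_self real_norm_def)
      finally show "norm (std_normal_density x * f x)
       \<le> norm ((\<bar>C\<bar> * Mb / sqrt (2*pi) * sqrt (2 * pi * \<sigma>\<^sup>2)) * normal_density 0 \<sigma> x)" .
    qed
  qed
qed

lemma R_bound:
  fixes s v \<rho> L \<eta> w :: real
  assumes v: "\<bar>v\<bar> \<le> \<rho> * L * w" and rl: "\<rho> * L \<le> \<eta>" and s1: "\<bar>s\<bar> \<le> 1" and sr: "\<bar>s\<bar> \<le> \<rho>"
    and L: "L \<ge> 1" and w: "w \<ge> 1"
  shows "\<bar>(1 + s) * exp v - 1 - s - v\<bar> \<le> 2 * L\<^sup>2 * \<rho>\<^sup>2 * w\<^sup>2 * exp (\<eta> * w)"
proof -
  have \<rho>: "\<rho> \<ge> 0" using sr by linarith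
  have e: "\<bar>exp v - 1 - v\<bar> \<le> v\<^sup>2 * exp \<bar>v\<bar> / 2" by (rule exp_taylor2_bound)
  have vv: "v\<^sup>2 \<le> (\<rho> * L * w)\<^sup>2"
    using v by (metis abs_ge_zero abs_le_square_iff abs_of_nonneg order_trans)
  have ev: "exp \<bar>v\<bar> \<le> exp (\<eta> * w)"
  proof -
    have "\<rho> * L * w \<le> \<eta> * w" using rl w by (intro mult_right_mono) auto
    then show ?thesis using v by simp
  qed
  have X: "(\<rho> * L * w)\<^sup>2 = L\<^sup>2 * \<rho>\<^sup>2 * w\<^sup>2" by (simp add: power_mult_distrib)
  have t1: "\<bar>exp v - 1 - v\<bar> \<le> L\<^sup>2 * \<rho>\<^sup>2 * w\<^sup>2 * exp (\<eta> * w) / 2"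
  proof -
    have "v\<^sup>2 * exp \<bar>v\<bar> \<le> (\<rho> * L * w)\<^sup>2 * exp (\<eta> * w)"
      by (intro mult_mono vv ev) auto
    then show ?thesis using e X by simp
  qed
  have t2: "\<bar>s\<bar> * \<bar>v\<bar> \<le> L\<^sup>2 * \<rho>\<^sup>2 * w\<^sup>2 * exp (\<eta> * w)"
  proof -
    have "\<bar>s\<bar> * \<bar>v\<bar> \<le> \<rho> * (\<rho> * L * w)" using sr v \<rho> by (intro mult_mono) auto
    also have "\<dots> = 1 * (\<rho>\<^sup>2 * L * w * 1)" by (simp add: power2_eq_square)
    also have "\<dots> \<le> L * (\<rho>\<^sup>2 * L * w * w)"
      using L w \<rho> by (intro mult_mono) auto
    also have "\<dots> = L\<^sup>2 * \<rho>\<^sup>2 * w\<^sup>2 * 1" by (simp add: power2_eq_square)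
    also have "\<dots> \<le> L\<^sup>2 * \<rho>\<^sup>2 * w\<^sup>2 * exp (\<eta> * w)"
    proof (intro mult_left_mono)
      have "\<eta> \<ge> 0" using rl \<rho> L by (smt (verit) mult_nonneg_nonneg)
      then show "1 \<le> exp (\<eta> * w)" using w by simp
    qed simp
    finally show ?thesis .
  qed
  have "(1 + s) * exp v - 1 - s - v = (1 + s) * (exp v - 1 - v) + s * v" by (simp add: algebra_simps)
  then have "\<bar>(1 + s) * exp v - 1 - s - v\<bar> \<le> \<bar>1 + s\<bar> * \<bar>exp v - 1 - v\<bar> + \<bar>s\<bar> * \<bar>v\<bar>"
    by (simp add: abs_mult[symmetric] abs_triangle_ineq)
  also have "\<bar>1 + s\<bar> * \<bar>exp v - 1 - v\<bar> \<le> 2 * (L\<^sup>2 * \<rho>\<^sup>2 * w\<^sup>2 * exp (\<eta> * w) / 2)"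
    using s1 t1 by (intro mult_mono) auto
  finally show ?thesis using t2 by simp
qed

lemma moment_expand:
  fixes K :: "'i::finite \<Rightarrow> real \<Rightarrow> real" and a :: "real^'i" and T v R :: "real \<Rightarrow> real"
  assumes Km: "\<And>i. K i \<in> borel_measurable borel" and Kb: "\<And>i x. \<bar>K i x\<bar> \<le> L"
    and Tm: "T \<in> borel_measurable borel" and Tb: "\<And>x. \<bar>T x\<bar> \<le> L * (1 + x\<^sup>2)"
    and int: "integrable lborel (\<lambda>x. std_normal_density x * ((1 + s) * exp (v x) * T x))"
    and vdef: "\<And>x. v x = k * x + z * x\<^sup>2 + (\<Sum>i\<in>UNIV. a $ i * K i x)"
    and Rdef: "\<And>x. R x = (1 + s) * exp (v x) - 1 - s - v x"
  shows "integrable lborel (\<lambda>x. std_normal_density x * (R x * T x))"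
    and "(LINT x|lborel. std_normal_density x * ((1 + s) * exp (v x) * T x))
       = (LINT x|lborel. std_normal_density x * T x) + s * (LINT x|lborel. std_normal_density x * T x)
         + k * (LINT x|lborel. std_normal_density x * (x * T x))
         + z * (LINT x|lborel. std_normal_density x * (x\<^sup>2 * T x))
         + (\<Sum>i\<in>UNIV. a $ i * (LINT x|lborel. std_normal_density x * (K i x * T x)))
         + (LINT x|lborel. std_normal_density x * (R x * T x))"
proof -
  have L: "L \<ge> 0" using Kb[of undefined 0] by linarith
  have x1: "\<bar>x\<bar> \<le> 1 + x\<^sup>2" for x :: real
  proof (cases "\<bar>x\<bar> \<le> 1")
    case True then show ?thesis by (simp add: add_increasing2)
  next
    case False
    then have "\<bar>x\<bar> * 1 \<le> \<bar>x\<bar> * \<bar>x\<bar>" by (intro mult_left_mono) auto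
    also have "\<bar>x\<bar> * \<bar>x\<bar> = x\<^sup>2" by (simp add: power2_eq_square)
    finally show ?thesis by simp
  qed
  have i0: "integrable lborel (\<lambda>x. std_normal_density x * T x)"
    by (rule integrable_weighted[where \<eta>=0 and C=L and n=1]) (use Tm Tb in auto)
  have i1: "integrable lborel (\<lambda>x. std_normal_density x * (x * T x))"
  proof (rule integrable_weighted[where \<eta>=0 and C=L and n=2])
    fix x :: real
    have "\<bar>x * T x\<bar> \<le> (1 + x\<^sup>2) * (L * (1 + x\<^sup>2))"
      unfolding abs_mult using x1[of x] Tb[of x] by (intro mult_mono) auto
    also have "(1 + x\<^sup>2) * (L * (1 + x\<^sup>2)) = L * (1 + x\<^sup>2) ^ 2 * exp (0 * x\<^sup>2)"
      by (simp add: power2_eq_square mult_ac)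
    finally show "\<bar>x * T x\<bar> \<le> L * (1 + x\<^sup>2) ^ 2 * exp (0 * x\<^sup>2)" .
  qed (use Tm in auto)
  have i2: "integrable lborel (\<lambda>x. std_normal_density x * (x\<^sup>2 * T x))"
  proof (rule integrable_weighted[where \<eta>=0 and C=L and n=2])
    fix x :: real
    have "\<bar>x\<^sup>2 * T x\<bar> \<le> (1 + x\<^sup>2) * (L * (1 + x\<^sup>2))"
      unfolding abs_mult using Tb[of x] by (intro mult_mono) auto
    also have "(1 + x\<^sup>2) * (L * (1 + x\<^sup>2)) = L * (1 + x\<^sup>2) ^ 2 * exp (0 * x\<^sup>2)"
      by (simp add: power2_eq_square mult_ac)
    finally show "\<bar>x\<^sup>2 * T x\<bar> \<le> L * (1 + x\<^sup>2) ^ 2 * exp (0 * x\<^sup>2)" .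
  qed (use Tm in auto)
  have iK: "integrable lborel (\<lambda>x. std_normal_density x * (K i x * T x))" for i
  proof (rule integrable_weighted[where \<eta>=0 and C="L*L" and n=1])
    fix x :: real
    have "\<bar>K i x * T x\<bar> \<le> L * (L * (1 + x\<^sup>2))"
      unfolding abs_mult using Tb[of x] Kb[of i x] L by (intro mult_mono) auto
    then show "\<bar>K i x * T x\<bar> \<le> L * L * (1 + x\<^sup>2) ^ 1 * exp (0 * x\<^sup>2)" by simp
  qed (use Tm Km in auto)
  have iS: "integrable lborel (\<lambda>x. \<Sum>i\<in>UNIV. a $ i * (std_normal_density x * (K i x * T x)))"
    by (rule Bochner_Integration.integrable_sum, rule integrable_mult_right, rule iK)
  have pw: "std_normal_density x * (R x * T x) = std_normal_density x * ((1 + s) * exp (v x) * T x)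
     - (std_normal_density x * T x + s * (std_normal_density x * T x)
         + k * (std_normal_density x * (x * T x))
         + z * (std_normal_density x * (x\<^sup>2 * T x))
         + (\<Sum>i\<in>UNIV. a $ i * (std_normal_density x * (K i x * T x))))" for x
  proof -
    have S: "(\<Sum>i\<in>UNIV. a $ i * (std_normal_density x * (K i x * T x)))
        = std_normal_density x * ((\<Sum>i\<in>UNIV. a $ i * K i x) * T x)"
      by (simp add: sum_distrib_left sum_distrib_right mult_ac)
    show ?thesis unfolding S Rdef vdef by algebra
  qed
  have iR: "integrable lborel (\<lambda>x. std_normal_density x * (R x * T x))"
    unfolding pw using int i0 i1 i2 iS by (intro Bochner_Integration.integrable_diff Bochner_Integration.integrable_add integrable_mult_right) auto
  then show "integrable lborel (\<lambda>x. std_normal_density x * (R x * T x))" .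
  have pw2: "std_normal_density x * ((1 + s) * exp (v x) * T x) =
        std_normal_density x * T x + s * (std_normal_density x * T x)
         + k * (std_normal_density x * (x * T x))
         + z * (std_normal_density x * (x\<^sup>2 * T x))
         + (\<Sum>i\<in>UNIV. a $ i * (std_normal_density x * (K i x * T x)))
         + std_normal_density x * (R x * T x)" for x
    using pw[of x] by simp
  show "(LINT x|lborel. std_normal_density x * ((1 + s) * exp (v x) * T x))
       = (LINT x|lborel. std_normal_density x * T x) + s * (LINT x|lborel. std_normal_density x * T x)
         + k * (LINT x|lborel. std_normal_density x * (x * T x))
         + z * (LINT x|lborel. std_normal_density x * (x\<^sup>2 * T x))
         + (\<Sum>i\<in>UNIV. a $ i * (LINT x|lborel. std_normal_density x * (K i x * T x)))
         + (LINT x|lborel. std_normal_density x * (R x * T x))"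
  proof -
    let ?f0 = "\<lambda>x. std_normal_density x * T x"
    let ?f1 = "\<lambda>x. std_normal_density x * (x * T x)"
    let ?f2 = "\<lambda>x. std_normal_density x * (x\<^sup>2 * T x)"
    let ?fS = "\<lambda>x. \<Sum>i\<in>UNIV. a $ i * (std_normal_density x * (K i x * T x))"
    let ?fR = "\<lambda>x. std_normal_density x * (R x * T x)"
    have j1: "integrable lborel (\<lambda>x. ?f0 x + s * ?f0 x)" using i0 by auto
    have j2: "integrable lborel (\<lambda>x. ?f0 x + s * ?f0 x + k * ?f1 x)" using j1 i1 by auto
    have j3: "integrable lborel (\<lambda>x. ?f0 x + s * ?f0 x + k * ?f1 x + z * ?f2 x)" using j2 i2 by auto
    have j4: "integrable lborel (\<lambda>x. ?f0 x + s * ?f0 x + k * ?f1 x + z * ?f2 x + ?fS x)" using j3 iS by auto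
    have "(LINT x|lborel. std_normal_density x * ((1 + s) * exp (v x) * T x))
        = (LINT x|lborel. ?f0 x + s * ?f0 x + k * ?f1 x + z * ?f2 x + ?fS x + ?fR x)"
      unfolding pw2 ..
    also have "\<dots> = (LINT x|lborel. ?f0 x + s * ?f0 x + k * ?f1 x + z * ?f2 x + ?fS x) + (LINT x|lborel. ?fR x)"
      using j4 iR by (rule Bochner_Integration.integral_add)
    also have "(LINT x|lborel. ?f0 x + s * ?f0 x + k * ?f1 x + z * ?f2 x + ?fS x)
        = (LINT x|lborel. ?f0 x + s * ?f0 x + k * ?f1 x + z * ?f2 x) + (LINT x|lborel. ?fS x)"
      using j3 iS by (rule Bochner_Integration.integral_add)
    also have "(LINT x|lborel. ?f0 x + s * ?f0 x + k * ?f1 x + z * ?f2 x)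
        = (LINT x|lborel. ?f0 x + s * ?f0 x + k * ?f1 x) + (LINT x|lborel. z * ?f2 x)"
      using j2 i2 by (intro Bochner_Integration.integral_add) auto
    also have "(LINT x|lborel. ?f0 x + s * ?f0 x + k * ?f1 x)
        = (LINT x|lborel. ?f0 x + s * ?f0 x) + (LINT x|lborel. k * ?f1 x)"
      using j1 i1 by (intro Bochner_Integration.integral_add) auto
    also have "(LINT x|lborel. ?f0 x + s * ?f0 x) = (LINT x|lborel. ?f0 x) + (LINT x|lborel. s * ?f0 x)"
      using i0 by (intro Bochner_Integration.integral_add) auto
    also have "(LINT x|lborel. ?fS x) = (\<Sum>i\<in>UNIV. a $ i * (LINT x|lborel. std_normal_density x * (K i x * T x)))"
      using iK by (simp add: integral_sum)
    finally show ?thesis by simp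
  qed
qed

lemma gm0: "(LINT x|lborel. std_normal_density x) = 1"
  by simp
lemma gm1: "(LINT x|lborel. std_normal_density x * x) = 0"
  using integral_std_normal_moment_odd[of 0] by simp
lemma gm2: "(LINT x|lborel. std_normal_density x * x\<^sup>2) = 1"
  using integral_std_normal_moment_even[of 1] by simp
lemma gm3: "(LINT x|lborel. std_normal_density x * x ^ 3) = 0"
  using integral_std_normal_moment_odd[of 1] by simp
lemma gm4: "(LINT x|lborel. std_normal_density x * x ^ 4) = 3"
  using integral_std_normal_moment_even[of 2] by (simp add: fact_numeral)

lemma R_int_bound:
  fixes T R v :: "real \<Rightarrow> real"
  assumes Tm: "T \<in> borel_measurable borel" and Tb: "\<And>x. \<bar>T x\<bar> \<le> L * (1 + x\<^sup>2)"
    and iR: "integrable lborel (\<lambda>x. std_normal_density x * (R x * T x))"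
    and Rdef: "\<And>x. R x = (1 + s) * exp (v x) - 1 - s - v x"
    and vb: "\<And>x. \<bar>v x\<bar> \<le> \<rho> * L * (1 + x\<^sup>2)"
    and rl: "\<rho> * L \<le> 1/8" and s1: "\<bar>s\<bar> \<le> 1" and sr: "\<bar>s\<bar> \<le> \<rho>" and L: "L \<ge> 1"
  shows "\<bar>LINT x|lborel. std_normal_density x * (R x * T x)\<bar>
     \<le> 2 * L^3 * \<rho>\<^sup>2 * (LINT x|lborel. std_normal_density x * ((1 + x\<^sup>2) ^ 3 * exp (1/8 * (1 + x\<^sup>2))))"
proof -
  let ?g = "\<lambda>x. std_normal_density x * ((1 + x\<^sup>2) ^ 3 * exp (1/8 * (1 + x\<^sup>2)))"
  have ig: "integrable lborel ?g"
  proof (rule integrable_weighted[where \<eta>="1/8" and C="exp (1/8)" and n=3])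
    fix x :: real
    have "exp (1/8 * (1 + x\<^sup>2)) = exp (1/8) * exp (1/8 * x\<^sup>2)"
      by (simp add: exp_add[symmetric] algebra_simps)
    then show "\<bar>(1 + x\<^sup>2) ^ 3 * exp (1/8 * (1 + x\<^sup>2))\<bar> \<le> exp (1/8) * (1 + x\<^sup>2) ^ 3 * exp (1/8 * x\<^sup>2)"
      by simp
  qed auto
  have "\<bar>LINT x|lborel. std_normal_density x * (R x * T x)\<bar>
      \<le> (LINT x|lborel. (2 * L^3 * \<rho>\<^sup>2) * ?g x)"
  proof (rule integral_abs_bound_integral)
    show "integrable lborel (\<lambda>x. 2 * L ^ 3 * \<rho>\<^sup>2 * ?g x)" using ig by auto
    show "integrable lborel (\<lambda>x. std_normal_density x * (R x * T x))" by (rule iR)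
    fix x :: real
    have w: "1 + x\<^sup>2 \<ge> 1" by simp
    have rb: "\<bar>R x\<bar> \<le> 2 * L\<^sup>2 * \<rho>\<^sup>2 * (1 + x\<^sup>2)\<^sup>2 * exp (1/8 * (1 + x\<^sup>2))"
      unfolding Rdef by (rule R_bound[OF vb rl s1 sr L w])
    have "\<bar>R x * T x\<bar> \<le> (2 * L\<^sup>2 * \<rho>\<^sup>2 * (1 + x\<^sup>2)\<^sup>2 * exp (1/8 * (1 + x\<^sup>2))) * (L * (1 + x\<^sup>2))"
      unfolding abs_mult by (intro mult_mono rb Tb) auto
    also have "\<dots> = 2 * L ^ 3 * \<rho>\<^sup>2 * ((1 + x\<^sup>2) ^ 3 * exp (1/8 * (1 + x\<^sup>2)))"
      by (simp add: power2_eq_square power3_eq_cube mult_ac)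
    finally have "\<bar>R x * T x\<bar> \<le> 2 * L ^ 3 * \<rho>\<^sup>2 * ((1 + x\<^sup>2) ^ 3 * exp (1/8 * (1 + x\<^sup>2)))" .
    then have "std_normal_density x * \<bar>R x * T x\<bar> \<le> std_normal_density x * (2 * L ^ 3 * \<rho>\<^sup>2 * ((1 + x\<^sup>2) ^ 3 * exp (1/8 * (1 + x\<^sup>2))))"
      by (intro mult_left_mono) auto
    then show "\<bar>std_normal_density x * (R x * T x)\<bar> \<le> 2 * L ^ 3 * \<rho>\<^sup>2 * ?g x"
      by (simp add: abs_mult mult_ac)
  qed
  also have "\<dots> = 2 * L^3 * \<rho>\<^sup>2 * (LINT x|lborel. ?g x)" by simp
  finally show ?thesis .
qed

lemma x_le_1px2: "\<bar>x\<bar> \<le> 1 + x\<^sup>2" for x :: real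
proof (cases "\<bar>x\<bar> \<le> 1")
  case True then show ?thesis by (simp add: add_increasing2)
next
  case False
  then have "\<bar>x\<bar> * 1 \<le> \<bar>x\<bar> * \<bar>x\<bar>" by (intro mult_left_mono) auto
  also have "\<bar>x\<bar> * \<bar>x\<bar> = x\<^sup>2" by (simp add: power2_eq_square)
  finally show ?thesis by simp
qed

lemma v_bound:
  fixes K :: "'i::finite \<Rightarrow> real \<Rightarrow> real" and a :: "real^'i"
  assumes Kb: "\<And>i x. \<bar>K i x\<bar> \<le> L" and L: "L \<ge> 1"
  shows "\<bar>k * x + z * x\<^sup>2 + (\<Sum>i\<in>UNIV. a $ i * K i x)\<bar>
     \<le> (\<bar>s\<bar> + \<bar>k\<bar> + \<bar>z\<bar> + (\<Sum>i\<in>UNIV. \<bar>a $ i\<bar>)) * L * (1 + x\<^sup>2)"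
proof -
  have w: "1 + x\<^sup>2 \<ge> 1" by simp
  have wL0: "1 * (1 + x\<^sup>2) \<le> L * (1 + x\<^sup>2)" by (rule mult_right_mono[OF L]) simp
  have wL: "1 + x\<^sup>2 \<le> L * (1 + x\<^sup>2)" using wL0 by (simp only: mult_1)
  have "\<bar>k * x\<bar> \<le> \<bar>k\<bar> * (1 + x\<^sup>2)" unfolding abs_mult by (intro mult_left_mono x_le_1px2) auto
  also have "\<dots> \<le> \<bar>k\<bar> * (L * (1 + x\<^sup>2))" by (intro mult_left_mono wL) auto
  finally have t1: "\<bar>k * x\<bar> \<le> \<bar>k\<bar> * (L * (1 + x\<^sup>2))" .
  have "\<bar>z * x\<^sup>2\<bar> \<le> \<bar>z\<bar> * (1 + x\<^sup>2)" unfolding abs_mult by (intro mult_left_mono) auto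
  also have "\<dots> \<le> \<bar>z\<bar> * (L * (1 + x\<^sup>2))" by (intro mult_left_mono wL) auto
  finally have t2: "\<bar>z * x\<^sup>2\<bar> \<le> \<bar>z\<bar> * (L * (1 + x\<^sup>2))" .
  have "\<bar>\<Sum>i\<in>UNIV. a $ i * K i x\<bar> \<le> (\<Sum>i\<in>UNIV. \<bar>a $ i * K i x\<bar>)" by (rule sum_abs)
  also have "\<dots> \<le> (\<Sum>i\<in>UNIV. \<bar>a $ i\<bar> * (L * (1 + x\<^sup>2)))"
  proof (intro sum_mono)
    fix i
    have "\<bar>K i x\<bar> \<le> L * (1 + x\<^sup>2)" using Kb[of i x] L w
      by (smt (verit) mult_le_cancel_left1)
    then show "\<bar>a $ i * K i x\<bar> \<le> \<bar>a $ i\<bar> * (L * (1 + x\<^sup>2))"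
      unfolding abs_mult by (intro mult_left_mono) auto
  qed
  also have "\<dots> = (\<Sum>i\<in>UNIV. \<bar>a $ i\<bar>) * (L * (1 + x\<^sup>2))" by (simp add: sum_distrib_right)
  finally have t3: "\<bar>\<Sum>i\<in>UNIV. a $ i * K i x\<bar> \<le> (\<Sum>i\<in>UNIV. \<bar>a $ i\<bar>) * (L * (1 + x\<^sup>2))" .
  have t0: "0 \<le> \<bar>s\<bar> * (L * (1 + x\<^sup>2))" using L by simp
  have "\<bar>k * x + z * x\<^sup>2 + (\<Sum>i\<in>UNIV. a $ i * K i x)\<bar>
      \<le> \<bar>k * x\<bar> + \<bar>z * x\<^sup>2\<bar> + \<bar>\<Sum>i\<in>UNIV. a $ i * K i x\<bar>" by linarith
  also have "\<dots> \<le> (\<bar>s\<bar> + \<bar>k\<bar> + \<bar>z\<bar> + (\<Sum>i\<in>UNIV. \<bar>a $ i\<bar>)) * (L * (1 + x\<^sup>2))"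
    using t0 t1 t2 t3 by (simp add: distrib_right)
  finally show ?thesis by (simp add: mult.assoc)
qed

lemma param_est:
  fixes K :: "'i::finite \<Rightarrow> real \<Rightarrow> real" and a c :: "real^'i" and v R :: "real \<Rightarrow> real"
  assumes Km: "\<And>i. K i \<in> borel_measurable borel" and Kb: "\<And>i x. \<bar>K i x\<bar> \<le> L" and L: "L \<ge> 1"
    and K_orthonormal: "\<And>i j. (LINT x|lborel. K i x * K j x * std_normal_density x)
                               = (if i = j then 1 else 0)"
    and K_orth_poly: "\<And>i k. k \<le> 2 \<Longrightarrow> (LINT x|lborel. K i x * x ^ k * std_normal_density x) = 0"
    and vdef: "\<And>x. v x = k * x + z * x\<^sup>2 + (\<Sum>i\<in>UNIV. a $ i * K i x)"
    and Rdef: "\<And>x. R x = (1 + s) * exp (v x) - 1 - s - v x"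
    and rho: "\<rho> = \<bar>s\<bar> + \<bar>k\<bar> + \<bar>z\<bar> + (\<Sum>i\<in>UNIV. \<bar>a $ i\<bar>)"
    and rl: "\<rho> * L \<le> 1/8" and s1: "\<bar>s\<bar> \<le> 1"
    and m0: "integrable lborel (\<lambda>x. std_normal_density x * ((1 + s) * exp (v x) * 1))"
            "(LINT x|lborel. std_normal_density x * ((1 + s) * exp (v x) * 1)) = 1"
    and m1: "integrable lborel (\<lambda>x. std_normal_density x * ((1 + s) * exp (v x) * x))"
            "(LINT x|lborel. std_normal_density x * ((1 + s) * exp (v x) * x)) = 0"
    and m2: "integrable lborel (\<lambda>x. std_normal_density x * ((1 + s) * exp (v x) * x\<^sup>2))"
            "(LINT x|lborel. std_normal_density x * ((1 + s) * exp (v x) * x\<^sup>2)) = 1"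
    and mK: "\<And>j. integrable lborel (\<lambda>x. std_normal_density x * ((1 + s) * exp (v x) * K j x))"
            "\<And>j. (LINT x|lborel. std_normal_density x * ((1 + s) * exp (v x) * K j x)) = c $ j"
  shows "\<bar>s\<bar> + \<bar>k\<bar> + \<bar>z\<bar> + (\<Sum>i\<in>UNIV. \<bar>a $ i - c $ i\<bar>)
     \<le> (4 + real CARD('i)) * (2 * L^3 * (LINT x|lborel. std_normal_density x * ((1 + x\<^sup>2) ^ 3 * exp (1/8 * (1 + x\<^sup>2))))) * \<rho>\<^sup>2"
proof -
  define CE where "CE = 2 * L^3 * (LINT x|lborel. std_normal_density x * ((1 + x\<^sup>2) ^ 3 * exp (1/8 * (1 + x\<^sup>2))))"
  have sr: "\<bar>s\<bar> \<le> \<rho>" unfolding rho by (simp add: sum_nonneg)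
  have vb: "\<bar>v x\<bar> \<le> \<rho> * L * (1 + x\<^sup>2)" for x
    unfolding vdef rho by (rule v_bound[OF Kb L])
  have L0: "L \<ge> 0" using L by simp
  have one: "1 \<le> L * (1 + x\<^sup>2)" for x :: real
  proof -
    have "1 * 1 \<le> L * (1 + x\<^sup>2)" using L by (intro mult_mono) auto
    then show ?thesis by simp
  qed
  have wL: "1 + x\<^sup>2 \<le> L * (1 + x\<^sup>2)" for x :: real
  proof -
    have "1 * (1 + x\<^sup>2) \<le> L * (1 + x\<^sup>2)" by (rule mult_right_mono[OF L]) simp
    then show ?thesis by (simp only: mult_1)
  qed
  note me = moment_expand[OF Km Kb _ _ _ vdef Rdef]
  note rib = R_int_bound[OF _ _ _ Rdef vb rl s1 sr L]
  have T0m: "(\<lambda>x. 1::real) \<in> borel_measurable borel" by simp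
  have T0b: "\<bar>1::real\<bar> \<le> L * (1 + x\<^sup>2)" for x using one[of x] by simp
  note e0 = me[where T="\<lambda>x. 1", OF T0m T0b m0(1)]
  have E0: "\<bar>LINT x|lborel. std_normal_density x * (R x * 1)\<bar> \<le> CE * \<rho>\<^sup>2"
    using rib[where T="\<lambda>x. 1", OF T0m T0b e0(1)] by (simp add: CE_def mult_ac)
  have q0: "(LINT x|lborel. std_normal_density x * (K i x * 1)) = 0" for i
    using K_orth_poly[of 0 i] by (simp add: mult.commute)
  have q1: "(LINT x|lborel. std_normal_density x * (x * 1)) = 0" using gm1 by simp
  have q2: "(LINT x|lborel. std_normal_density x * (x\<^sup>2 * 1)) = 1" using gm2 by simp
  have eq0: "1 = 1 + s + z + (LINT x|lborel. std_normal_density x * (R x * 1))"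
    using e0(2) m0(2) q0 q1 q2 by simp
  have T1m: "(\<lambda>x. x::real) \<in> borel_measurable borel" by simp
  have T1b: "\<bar>x\<bar> \<le> L * (1 + x\<^sup>2)" for x :: real using x_le_1px2[of x] wL[of x] by linarith
  note e1 = me[where T="\<lambda>x. x", OF T1m T1b m1(1)]
  have E1: "\<bar>LINT x|lborel. std_normal_density x * (R x * x)\<bar> \<le> CE * \<rho>\<^sup>2"
    using rib[where T="\<lambda>x. x", OF T1m T1b e1(1)] by (simp add: CE_def mult_ac)
  have r0: "(LINT x|lborel. std_normal_density x * (K i x * x)) = 0" for i
    using K_orth_poly[of 1 i] by (simp add: mult_ac)
  have r1: "(LINT x|lborel. std_normal_density x * (x * x)) = 1" using gm2 by (simp add: power2_eq_square)
  have r2: "(LINT x|lborel. std_normal_density x * (x\<^sup>2 * x)) = 0" using gm3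
    by (simp add: power2_eq_square power3_eq_cube)
  have eq1: "0 = k + (LINT x|lborel. std_normal_density x * (R x * x))"
    using e1(2) m1(2) r0 r1 r2 gm1 by simp
  have T2m: "(\<lambda>x. x\<^sup>2::real) \<in> borel_measurable borel" by simp
  have T2b: "\<bar>x\<^sup>2\<bar> \<le> L * (1 + x\<^sup>2)" for x :: real using wL[of x] by simp
  note e2 = me[where T="\<lambda>x. x\<^sup>2", OF T2m T2b m2(1)]
  have E2: "\<bar>LINT x|lborel. std_normal_density x * (R x * x\<^sup>2)\<bar> \<le> CE * \<rho>\<^sup>2"
    using rib[where T="\<lambda>x. x\<^sup>2", OF T2m T2b e2(1)] by (simp add: CE_def mult_ac)
  have u0: "(LINT x|lborel. std_normal_density x * (K i x * x\<^sup>2)) = 0" for i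
    using K_orth_poly[of 2 i] by (simp add: mult_ac)
  have u1: "(LINT x|lborel. std_normal_density x * (x * x\<^sup>2)) = 0" using gm3
    by (simp add: power2_eq_square power3_eq_cube mult_ac)
  have u2: "(LINT x|lborel. std_normal_density x * (x\<^sup>2 * x\<^sup>2)) = 3" using gm4
  proof -
    have "\<And>x::real. x\<^sup>2 * x\<^sup>2 = x ^ 4" by (simp add: power_add[symmetric])
    then show ?thesis using gm4 by simp
  qed
  have eq2: "1 = 1 + s + 3 * z + (LINT x|lborel. std_normal_density x * (R x * x\<^sup>2))"
    using e2(2) m2(2) u0 u1 u2 gm2 by simp
  have eqK: "c $ j = a $ j + (LINT x|lborel. std_normal_density x * (R x * K j x))"
   and EK: "\<bar>LINT x|lborel. std_normal_density x * (R x * K j x)\<bar> \<le> CE * \<rho>\<^sup>2" for j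
  proof -
    have TKm: "K j \<in> borel_measurable borel" by (rule Km)
    have TKb: "\<bar>K j x\<bar> \<le> L * (1 + x\<^sup>2)" for x using Kb[of j x] wL[of x] one[of x] L
    proof -
      have "L * 1 \<le> L * (1 + x\<^sup>2)" by (rule mult_left_mono) (auto simp: L0)
      then show ?thesis using Kb[of j x] by linarith
    qed
    note eK = me[where T="K j", OF TKm TKb mK(1)]
    show "\<bar>LINT x|lborel. std_normal_density x * (R x * K j x)\<bar> \<le> CE * \<rho>\<^sup>2"
      using rib[where T="K j", OF TKm TKb eK(1)] by (simp add: CE_def mult_ac)
    have w0: "(LINT x|lborel. std_normal_density x * K j x) = 0"
      using K_orth_poly[of 0 j] by (simp add: mult.commute)
    have w1: "(LINT x|lborel. std_normal_density x * (x * K j x)) = 0"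
      using K_orth_poly[of 1 j] by (simp add: mult_ac)
    have w2: "(LINT x|lborel. std_normal_density x * (x\<^sup>2 * K j x)) = 0"
      using K_orth_poly[of 2 j] by (simp add: mult_ac)
    have w3: "(LINT x|lborel. std_normal_density x * (K i x * K j x)) = (if i = j then 1 else 0)" for i
      using K_orthonormal[of i j] by (simp add: mult_ac)
    have "(\<Sum>i\<in>UNIV. a $ i * (LINT x|lborel. std_normal_density x * (K i x * K j x))) = a $ j"
      unfolding w3 by (simp add: if_distrib sum.delta cong: if_cong)
    then show "c $ j = a $ j + (LINT x|lborel. std_normal_density x * (R x * K j x))"
      using eK(2) mK(2)[of j] w0 w1 w2 by simp
  qed
  have bz: "\<bar>z\<bar> \<le> CE * \<rho>\<^sup>2" using eq0 eq2 E0 E2 by linarith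
  have bs: "\<bar>s\<bar> \<le> 2 * (CE * \<rho>\<^sup>2)" using eq0 eq2 E0 E2 by linarith
  have bk: "\<bar>k\<bar> \<le> CE * \<rho>\<^sup>2" using eq1 E1 by linarith
  have "(\<Sum>i\<in>UNIV. \<bar>a $ i - c $ i\<bar>) \<le> of_nat (card (UNIV::'i set)) * (CE * \<rho>\<^sup>2)"
  proof (rule sum_bounded_above)
    fix i show "\<bar>a $ i - c $ i\<bar> \<le> CE * \<rho>\<^sup>2" using eqK[of i] EK[of i] by linarith
  qed
  moreover have "(4 + real CARD('i)) * CE * \<rho>\<^sup>2 = 2 * (CE * \<rho>\<^sup>2) + CE * \<rho>\<^sup>2 + CE * \<rho>\<^sup>2
      + of_nat (card (UNIV::'i set)) * (CE * \<rho>\<^sup>2)" by (simp add: algebra_simps)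
  ultimately have "\<bar>s\<bar> + \<bar>k\<bar> + \<bar>z\<bar> + (\<Sum>i\<in>UNIV. \<bar>a $ i - c $ i\<bar>) \<le> (4 + real CARD('i)) * CE * \<rho>\<^sup>2"
    using bz bs bk by linarith
  then show ?thesis unfolding CE_def .
qed

lemma final_pw:
  fixes K :: "'i::finite \<Rightarrow> real \<Rightarrow> real" and a c :: "real^'i"
  assumes Kb: "\<And>i x. \<bar>K i x\<bar> \<le> L" and L: "L \<ge> 1"
    and vdef: "v = k * x + z * x\<^sup>2 + (\<Sum>i\<in>UNIV. a $ i * K i x)"
    and vb: "\<bar>v\<bar> \<le> \<rho> * L * (1 + x\<^sup>2)" and rl: "\<rho> * L \<le> \<eta>" and s1: "\<bar>s\<bar> \<le> 1" and sr: "\<bar>s\<bar> \<le> \<rho>"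
    and sig: "\<sigma> = \<bar>s\<bar> + \<bar>k\<bar> + \<bar>z\<bar> + (\<Sum>i\<in>UNIV. \<bar>a $ i - c $ i\<bar>)"
  shows "\<bar>exp (\<delta> * x\<^sup>2) * (std_normal_density x * ((1 + s) * exp v) - expfam_lin c K x)\<bar>
     \<le> exp (\<delta> * x\<^sup>2) * std_normal_density x * ((1 + x\<^sup>2)\<^sup>2 * exp (\<eta> * x\<^sup>2)) * (\<sigma> * L + 2 * L\<^sup>2 * \<rho>\<^sup>2 * exp \<eta>)"
proof -
  define R where "R = (1 + s) * exp v - 1 - s - v"
  define w where "w = 1 + x\<^sup>2"
  have w1: "w \<ge> 1" by (simp add: w_def)
  have \<rho>0: "\<rho> \<ge> 0" using sr by linarith
  have \<eta>0: "\<eta> \<ge> 0" using rl \<rho>0 L by (smt (verit) mult_nonneg_nonneg)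
  have Rb: "\<bar>R\<bar> \<le> 2 * L\<^sup>2 * \<rho>\<^sup>2 * w\<^sup>2 * exp (\<eta> * w)"
    unfolding R_def using R_bound[OF _ rl s1 sr L w1, of v] vb by (simp add: w_def)
  have sum_eq: "(\<Sum>i\<in>UNIV. a $ i * K i x) - (\<Sum>i\<in>UNIV. c $ i * K i x) = (\<Sum>i\<in>UNIV. (a - c) $ i * K i x)"
    by (simp add: sum_subtractf[symmetric] algebra_simps)
  have diff: "(1 + s) * exp v - (1 + (\<Sum>i\<in>UNIV. c $ i * K i x))
      = s + (k * x + z * x\<^sup>2 + (\<Sum>i\<in>UNIV. (a - c) $ i * K i x)) + R"
    unfolding R_def vdef using sum_eq by (simp add: algebra_simps)
  have lb: "\<bar>k * x + z * x\<^sup>2 + (\<Sum>i\<in>UNIV. (a - c) $ i * K i x)\<bar>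
      \<le> (\<bar>0\<bar> + \<bar>k\<bar> + \<bar>z\<bar> + (\<Sum>i\<in>UNIV. \<bar>(a - c) $ i\<bar>)) * L * (1 + x\<^sup>2)"
    by (rule v_bound[OF Kb L])
  have sL: "\<bar>s\<bar> \<le> \<bar>s\<bar> * L * w"
  proof -
    have "1 * 1 \<le> L * w" using L w1 by (intro mult_mono) auto
    then have "\<bar>s\<bar> * 1 \<le> \<bar>s\<bar> * (L * w)" by (intro mult_left_mono) auto
    then show ?thesis by (simp add: mult.assoc)
  qed
  have part1: "\<bar>s + (k * x + z * x\<^sup>2 + (\<Sum>i\<in>UNIV. (a - c) $ i * K i x))\<bar> \<le> \<sigma> * L * w"
  proof -
    have "\<bar>s + (k * x + z * x\<^sup>2 + (\<Sum>i\<in>UNIV. (a - c) $ i * K i x))\<bar>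
       \<le> \<bar>s\<bar> * L * w + (\<bar>k\<bar> + \<bar>z\<bar> + (\<Sum>i\<in>UNIV. \<bar>a $ i - c $ i\<bar>)) * L * w"
      using lb sL by (simp add: w_def)
    also have "\<dots> = \<sigma> * L * w" by (simp add: sig algebra_simps)
    finally show ?thesis .
  qed
  have e: "exp (\<eta> * w) = exp \<eta> * exp (\<eta> * x\<^sup>2)" by (simp add: w_def exp_add[symmetric] algebra_simps)
  have ex1: "exp (\<eta> * x\<^sup>2) \<ge> 1" using \<eta>0 by simp
  have A: "\<sigma> * L * w \<le> \<sigma> * L * (w\<^sup>2 * exp (\<eta> * x\<^sup>2))"
  proof (intro mult_left_mono)
    have "w * 1 \<le> w * w" using w1 by (intro mult_left_mono) auto
    also have "\<dots> * 1 \<le> (w * w) * exp (\<eta> * x\<^sup>2)" using ex1 w1 by (intro mult_left_mono) auto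
    finally show "w \<le> w\<^sup>2 * exp (\<eta> * x\<^sup>2)" by (simp add: power2_eq_square)
    show "0 \<le> \<sigma> * L" unfolding sig using L by (intro mult_nonneg_nonneg add_nonneg_nonneg sum_nonneg) auto
  qed
  have B: "\<sigma> * L * (w\<^sup>2 * exp (\<eta> * x\<^sup>2)) + 2 * L\<^sup>2 * \<rho>\<^sup>2 * w\<^sup>2 * exp (\<eta> * w)
     = (w\<^sup>2 * exp (\<eta> * x\<^sup>2)) * (\<sigma> * L + 2 * L\<^sup>2 * \<rho>\<^sup>2 * exp \<eta>)"
    unfolding e by (simp add: algebra_simps)
  have "\<bar>s + (k * x + z * x\<^sup>2 + (\<Sum>i\<in>UNIV. (a - c) $ i * K i x)) + R\<bar>
      \<le> (w\<^sup>2 * exp (\<eta> * x\<^sup>2)) * (\<sigma> * L + 2 * L\<^sup>2 * \<rho>\<^sup>2 * exp \<eta>)"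
    using part1 Rb A B by linarith
  then have main: "\<bar>(1 + s) * exp v - (1 + (\<Sum>i\<in>UNIV. c $ i * K i x))\<bar>
      \<le> (w\<^sup>2 * exp (\<eta> * x\<^sup>2)) * (\<sigma> * L + 2 * L\<^sup>2 * \<rho>\<^sup>2 * exp \<eta>)"
    unfolding diff .
  have "\<bar>exp (\<delta> * x\<^sup>2) * (std_normal_density x * ((1 + s) * exp v) - expfam_lin c K x)\<bar>
      = (exp (\<delta> * x\<^sup>2) * std_normal_density x) * \<bar>(1 + s) * exp v - (1 + (\<Sum>i\<in>UNIV. c $ i * K i x))\<bar>"
    unfolding expfam_lin_def by (simp add: abs_mult right_diff_distrib[symmetric] mult.assoc)
  also have "\<dots> \<le> (exp (\<delta> * x\<^sup>2) * std_normal_density x) * ((w\<^sup>2 * exp (\<eta> * x\<^sup>2)) * (\<sigma> * L + 2 * L\<^sup>2 * \<rho>\<^sup>2 * exp \<eta>))"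
    by (intro mult_left_mono main) auto
  finally show ?thesis by (simp add: w_def mult.assoc)
qed

lemma sup_bound:
  fixes \<delta> \<eta> x :: real
  assumes \<eta>: "\<eta> > 0" and d: "\<delta> + \<eta> \<le> 1/2 - \<eta>"
  shows "exp (\<delta> * x\<^sup>2) * std_normal_density x * ((1 + x\<^sup>2)\<^sup>2 * exp (\<eta> * x\<^sup>2))
     \<le> (max 1 (2 / \<eta>))\<^sup>2 / sqrt (2 * pi)"
proof -
  have p: "(1 + x\<^sup>2) ^ 2 \<le> (max 1 (real 2 / \<eta>)) ^ 2 * exp (\<eta> * x\<^sup>2)" by (rule poly_exp_bound[OF \<eta>])
  have "exp (\<delta> * x\<^sup>2) * std_normal_density x * ((1 + x\<^sup>2)\<^sup>2 * exp (\<eta> * x\<^sup>2))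
      = (1 + x\<^sup>2)\<^sup>2 * (exp (\<delta> * x\<^sup>2) * exp (- x\<^sup>2 / 2) * exp (\<eta> * x\<^sup>2)) / sqrt (2 * pi)"
    by (simp add: std_normal_density_def)
  also have "exp (\<delta> * x\<^sup>2) * exp (- x\<^sup>2 / 2) * exp (\<eta> * x\<^sup>2) = exp (\<delta> * x\<^sup>2 + - x\<^sup>2 / 2 + \<eta> * x\<^sup>2)"
    by (simp only: exp_add)
  also have "exp (\<delta> * x\<^sup>2 + - x\<^sup>2 / 2 + \<eta> * x\<^sup>2) \<le> exp (- \<eta> * x\<^sup>2)"
  proof -
    have "(\<delta> + \<eta>) * x\<^sup>2 \<le> (1/2 - \<eta>) * x\<^sup>2" using d by (intro mult_right_mono) auto
    then show ?thesis by (simp add: algebra_simps)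
  qed
  then have "(1 + x\<^sup>2)\<^sup>2 * exp (\<delta> * x\<^sup>2 + - x\<^sup>2 / 2 + \<eta> * x\<^sup>2) / sqrt (2 * pi)
      \<le> (max 1 (2 / \<eta>)) ^ 2 * exp (\<eta> * x\<^sup>2) * exp (- \<eta> * x\<^sup>2) / sqrt (2 * pi)"
    using p by (intro divide_right_mono mult_mono) auto
  also have "\<dots> = (max 1 (2 / \<eta>))\<^sup>2 / sqrt (2 * pi)" by (simp add: exp_add[symmetric])
  finally show ?thesis .
qed

theorem theorem1:
  fixes G :: "'i::finite \<Rightarrow> real \<Rightarrow> real"
    and \<alpha> \<beta> \<gamma> \<delta>c :: "'i \<Rightarrow> real"
    and K :: "'i \<Rightarrow> real \<Rightarrow> real"
    and A \<kappa> \<zeta> :: "real^'i \<Rightarrow> real"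
    and a :: "real^'i \<Rightarrow> real^'i"
    and U :: "(real^'i) set"
    and D :: "real^'i \<Rightarrow> ((real^'i) \<Rightarrow>\<^sub>L (real \<times> real \<times> real \<times> (real^'i)))"
  assumes G_meas: "\<And>i. G i \<in> borel_measurable borel"
    and G_growth: "\<And>i. \<exists>B>0. \<forall>x. \<bar>G i x\<bar> \<le> B * (1 + x\<^sup>2)"
    and K_def: "\<And>i x. K i x = (G i x + \<alpha> i * x\<^sup>2 + \<beta> i * x + \<gamma> i) / \<delta>c i"
    and K_orthonormal: "\<And>i j. (LINT x|lborel. K i x * K j x * std_normal_density x)
                               = (if i = j then 1 else 0)"
    and K_orth_poly: "\<And>i k. k \<le> 2 \<Longrightarrow> (LINT x|lborel. K i x * x ^ k * std_normal_density x) = 0"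
    and B1: "\<exists>\<epsilon>>0. \<forall>x. \<forall>h::real^'i. h \<bullet> h < \<epsilon> \<longrightarrow> (\<Sum>i\<in>UNIV. h $ i * K i x) \<ge> - 1/2"
    and B2: "\<exists>M::real \<Rightarrow> real.
               (\<forall>x. (\<Sum>i\<in>UNIV. \<Sum>j\<in>UNIV. \<Sum>k\<in>UNIV. \<bar>K i x * K j x * K k x\<bar>) \<le> M x)
             \<and> (\<integral>\<^sup>+ x. ennreal (std_normal_density x * M x) \<partial>lborel) < \<infinity>"
    and U_open: "open U" and U0: "0 \<in> U"
    and deriv: "\<And>c. c \<in> U \<Longrightarrow>
                  ((\<lambda>c. (A c, \<kappa> c, \<zeta> c, a c)) has_derivative blinfun_apply (D c)) (at c)"
    and deriv_cont: "continuous_on U D"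
    and lim0: "((\<lambda>c. (A c, \<kappa> c, \<zeta> c, a c)) \<longlongrightarrow> (1 / sqrt (2 * pi), 0, - 1/2, 0)) (at 0)"
    and dens_nonneg: "\<And>c x. c \<in> U \<Longrightarrow> expfam (A c) (\<kappa> c) (\<zeta> c) (a c) K x \<ge> 0"
    and dens_int: "\<And>c. c \<in> U \<Longrightarrow> integrable lborel (expfam (A c) (\<kappa> c) (\<zeta> c) (a c) K)
                      \<and> (LINT x|lborel. expfam (A c) (\<kappa> c) (\<zeta> c) (a c) K x) = 1"
    and mean0: "\<And>c. c \<in> U \<Longrightarrow> integrable lborel (\<lambda>x. x * expfam (A c) (\<kappa> c) (\<zeta> c) (a c) K x)
                      \<and> (LINT x|lborel. x * expfam (A c) (\<kappa> c) (\<zeta> c) (a c) K x) = 0"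
    and var1: "\<And>c. c \<in> U \<Longrightarrow> integrable lborel (\<lambda>x. x\<^sup>2 * expfam (A c) (\<kappa> c) (\<zeta> c) (a c) K x)
                      \<and> (LINT x|lborel. x\<^sup>2 * expfam (A c) (\<kappa> c) (\<zeta> c) (a c) K x) = 1"
    and moments: "\<And>c i. c \<in> U \<Longrightarrow>
                      integrable lborel (\<lambda>x. expfam (A c) (\<kappa> c) (\<zeta> c) (a c) K x * K i x)
                      \<and> (LINT x|lborel. expfam (A c) (\<kappa> c) (\<zeta> c) (a c) K x * K i x) = c $ i"
  shows "\<forall>\<delta>::real. \<delta> < 1/2 \<longrightarrow>
           (\<exists>C. \<forall>\<^sub>F c in at 0. \<forall>x.
              \<bar>exp (\<delta> * x\<^sup>2) * (expfam (A c) (\<kappa> c) (\<zeta> c) (a c) K x - expfam_lin c K x)\<bar>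
                \<le> C * (norm c)\<^sup>2)"
proof (intro allI impI)
  fix \<delta> :: real assume \<delta>: "\<delta> < 1/2"
  note [measurable] = G_meas
  obtain \<epsilon> where \<epsilon>: "\<epsilon> > 0" and \<epsilon>h: "\<And>x (h::real^'i). h \<bullet> h < \<epsilon> \<Longrightarrow> (\<Sum>i\<in>UNIV. h $ i * K i x) \<ge> - 1/2"
    using B1 by blast
  define L where "L = max 1 (1 / sqrt \<epsilon>)"
  have L: "L \<ge> 1" by (simp add: L_def)
  have Kb: "\<bar>K i x\<bar> \<le> L" for i x
  proof -
    define t where "t = sqrt \<epsilon> / 2"
    have t0: "t > 0" using \<epsilon> by (simp add: t_def)
    have t2: "t\<^sup>2 < \<epsilon>" using \<epsilon> by (simp add: t_def power_divide)
    have key: "u * K i x \<ge> - 1/2" if "u\<^sup>2 < \<epsilon>" for u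
    proof -
      define h :: "real^'i" where "h = (\<chi> j. if j = i then u else 0)"
      have "h \<bullet> h = u\<^sup>2" unfolding h_def inner_vec_def
        by (simp add: power2_eq_square if_distrib cong: if_cong)
      moreover have "(\<Sum>j\<in>UNIV. h $ j * K j x) = (\<Sum>j\<in>UNIV. if j = i then u * K i x else 0)"
        unfolding h_def by (intro sum.cong) auto
      then have "(\<Sum>j\<in>UNIV. h $ j * K j x) = u * K i x" by simp
      ultimately show ?thesis using \<epsilon>h[of h x] that by simp
    qed
    have a1: "t * K i x \<ge> -1/2" using key[of t] t2 by simp
    have a2: "(-t) * K i x \<ge> -1/2" using key[of "-t"] t2 by simp
    have "\<bar>t * K i x\<bar> \<le> 1/2" using a1 a2 by auto
    then have "t * \<bar>K i x\<bar> \<le> 1/2" using t0 by (simp add: abs_mult)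
    then have "\<bar>K i x\<bar> \<le> 1 / (2*t)" using t0 by (simp add: field_simps)
    also have "1/(2*t) = 1 / sqrt \<epsilon>" by (simp add: t_def)
    finally show ?thesis unfolding L_def by linarith
  qed
  have Km: "K i \<in> borel_measurable borel" for i
  proof -
    have "K i = (\<lambda>x. (G i x + \<alpha> i * x\<^sup>2 + \<beta> i * x + \<gamma> i) / \<delta>c i)" by (rule ext) (rule K_def)
    also have "\<dots> \<in> borel_measurable borel" by measurable
    finally show ?thesis .
  qed
  define P where "P = (\<lambda>c. (A c, \<kappa> c, \<zeta> c, a c))"
  define P0 where "P0 = (1 / sqrt (2 * pi), 0::real, - 1/2::real, 0::real^'i)"
  have dP0: "(P has_derivative blinfun_apply (D 0)) (at 0)" using deriv[OF U0] unfolding P_def .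
  have "(P \<longlongrightarrow> P 0) (at 0)" using has_derivative_continuous[OF dP0] by (simp add: isCont_def)
  moreover have "(P \<longlongrightarrow> P0) (at 0)" using lim0 unfolding P_def P0_def .
  ultimately have PP0: "P 0 = P0" using tendsto_unique[of "at (0::real^'i)" P "P 0" P0] by simp
  have "\<forall>e>0. \<exists>d>0. \<forall>y. norm (y - 0) < d \<longrightarrow> norm (P y - P 0 - blinfun_apply (D 0) (y - 0)) \<le> e * norm (y - 0)"
    using dP0 unfolding has_derivative_at_alt by blast
  from this[rule_format, of 1] obtain d1 where d1: "d1 > 0"
    and d1h: "\<And>y. norm y < d1 \<Longrightarrow> norm (P y - P0 - blinfun_apply (D 0) y) \<le> norm y"
    using PP0 by auto
  define Mp where "Mp = norm (D 0) + 1"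
  have Plip: "norm (P y - P0) \<le> Mp * norm y" if "norm y < d1" for y
  proof -
    have "norm (P y - P0) \<le> norm (P y - P0 - blinfun_apply (D 0) y) + norm (blinfun_apply (D 0) y)"
      using norm_triangle_ineq[of "P y - P0 - blinfun_apply (D 0) y" "blinfun_apply (D 0) y"] by simp
    also have "\<dots> \<le> norm y + norm (D 0) * norm y"
      using d1h[OF that] norm_blinfun[of "D 0" y] by (intro add_mono) auto
    finally show ?thesis by (simp add: Mp_def algebra_simps)
  qed
  define s where "s c = A c * sqrt (2 * pi) - 1" for c
  define z where "z c = \<zeta> c + 1/2" for c
  define \<rho> where "\<rho> c = \<bar>s c\<bar> + \<bar>\<kappa> c\<bar> + \<bar>z c\<bar> + (\<Sum>i\<in>UNIV. \<bar>a c $ i\<bar>)" for c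
  define N where "N = real CARD('i)"
  define M\<rho> where "M\<rho> = (sqrt (2 * pi) + 2 + N) * Mp"
  have Mp0: "Mp \<ge> 0" by (simp add: Mp_def)
  have M\<rho>0: "M\<rho> \<ge> 0" unfolding M\<rho>_def N_def using Mp0 by simp
  have \<rho>b: "\<rho> y \<le> M\<rho> * norm y" if "norm y < d1" for y
  proof -
    have nP: "norm (P y - P0) = norm (A y - 1 / sqrt (2 * pi), \<kappa> y, \<zeta> y + 1/2, a y)"
      by (simp add: P_def P0_def)
    let ?n = "norm (P y - P0)"
    have cA: "\<bar>A y - 1 / sqrt (2 * pi)\<bar> \<le> ?n" unfolding nP using norm_fst_le by (metis real_norm_def)
    have cR: "norm (\<kappa> y, \<zeta> y + 1/2, a y) \<le> ?n" unfolding nP by (rule norm_snd_le)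
    have ck: "\<bar>\<kappa> y\<bar> \<le> ?n" using cR norm_fst_le[of "\<kappa> y" "(\<zeta> y + 1/2, a y)"] by simp
    have cR2: "norm (\<zeta> y + 1/2, a y) \<le> ?n" using cR norm_snd_le[of "(\<zeta> y + 1/2, a y)" "\<kappa> y"] by simp
    have cz: "\<bar>z y\<bar> \<le> ?n" using cR2 norm_fst_le[of "\<zeta> y + 1/2" "a y"] by (simp add: z_def)
    have ca: "norm (a y) \<le> ?n" using cR2 norm_snd_le[of "a y" "\<zeta> y + 1/2"] by simp
    have cs: "\<bar>s y\<bar> \<le> sqrt (2 * pi) * ?n"
    proof -
      have "s y = sqrt (2 * pi) * (A y - 1 / sqrt (2 * pi))" by (simp add: s_def algebra_simps)
      then have "\<bar>s y\<bar> = sqrt (2 * pi) * \<bar>A y - 1 / sqrt (2 * pi)\<bar>" by (simp add: abs_mult)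
      then show ?thesis using cA by (simp add: mult_left_mono)
    qed
    have csum: "(\<Sum>i\<in>UNIV. \<bar>a y $ i\<bar>) \<le> of_nat (card (UNIV::'i set)) * ?n"
      by (rule sum_bounded_above) (use ca component_le_norm_cart order_trans in blast)
    have "\<rho> y \<le> (sqrt (2 * pi) + 2 + N) * ?n"
      unfolding \<rho>_def N_def using cs ck cz csum by (simp add: algebra_simps)
    also have "\<dots> \<le> (sqrt (2 * pi) + 2 + N) * (Mp * norm y)"
      using Plip[OF that] by (intro mult_left_mono) (auto simp: N_def)
    finally show ?thesis by (simp add: M\<rho>_def mult_ac)
  qed
  obtain d2 where d2: "d2 > 0" "ball 0 d2 \<subseteq> U" using openE[OF U_open U0] by blast
  define \<delta>0 where "\<delta>0 = max \<delta> 0"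
  define \<eta> where "\<eta> = (1/2 - \<delta>0) / 2"
  have \<eta>0: "\<eta> > 0" using \<delta> by (simp add: \<eta>_def \<delta>0_def)
  have \<delta>\<delta>0: "\<delta> \<le> \<delta>0" by (simp add: \<delta>0_def)
  have \<eta>d: "\<delta> + \<eta> \<le> 1/2 - \<eta>" using \<delta>\<delta>0 unfolding \<eta>_def by (simp add: field_simps)
  define d3 where "d3 = min (1/8) \<eta> / (M\<rho> * L + 1)"
  have ML0: "M\<rho> * L + 1 > 0" using M\<rho>0 L by (smt (verit) mult_nonneg_nonneg)
  have d3: "d3 > 0" using \<eta>0 ML0 by (simp add: d3_def)
  define J where "J = (LINT x|lborel. std_normal_density x * ((1 + x\<^sup>2) ^ 3 * exp (1/8 * (1 + x\<^sup>2))))"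
  have J0: "J \<ge> 0" unfolding J_def by (intro integral_nonneg_AE AE_I2) simp
  define CE where "CE = 2 * L^3 * J"
  have CE0: "CE \<ge> 0" using J0 L by (simp add: CE_def)
  define Mb where "Mb = (max 1 (2 / \<eta>))\<^sup>2 / sqrt (2 * pi)"
  define C where "C = Mb * ((4 + N) * CE * L * M\<rho>\<^sup>2 + 2 * L\<^sup>2 * M\<rho>\<^sup>2 * exp \<eta>)"
  define d where "d = min d1 (min d2 d3)"
  have d: "d > 0" using d1 d2 d3 by (simp add: d_def)
  show "\<exists>C. \<forall>\<^sub>F c in at 0. \<forall>x.
              \<bar>exp (\<delta> * x\<^sup>2) * (expfam (A c) (\<kappa> c) (\<zeta> c) (a c) K x - expfam_lin c K x)\<bar>
                \<le> C * (norm c)\<^sup>2"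
  proof (intro exI[of _ C], unfold eventually_at, intro exI[of _ d] conjI d ballI impI allI)
    fix c :: "real^'i" and x :: real
    assume "c \<in> UNIV" and "c \<noteq> 0 \<and> dist c 0 < d"
    then have nc: "norm c < d" by simp
    have cU: "c \<in> U" using d2(2) nc by (auto simp: d_def)
    have \<rho>c: "\<rho> c \<le> M\<rho> * norm c" using \<rho>b[of c] nc by (simp add: d_def)
    have \<rho>0: "\<rho> c \<ge> 0" unfolding \<rho>_def by (intro add_nonneg_nonneg sum_nonneg) auto
    have \<rho>L: "\<rho> c * L \<le> min (1/8) \<eta>"
    proof -
      have "\<rho> c * L \<le> M\<rho> * norm c * L" using \<rho>c L by (intro mult_right_mono) auto
      also have "\<dots> \<le> (M\<rho> * L + 1) * norm c" by (simp add: algebra_simps)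
      also have "\<dots> \<le> (M\<rho> * L + 1) * d3" using nc ML0 by (intro mult_left_mono) (auto simp: d_def)
      also have "\<dots> = min (1/8) \<eta>" using ML0 by (simp add: d3_def)
      finally show ?thesis .
    qed
    have sr: "\<bar>s c\<bar> \<le> \<rho> c" unfolding \<rho>_def by (simp add: sum_nonneg)
    have \<rho>le: "\<rho> c \<le> \<rho> c * L" using \<rho>0 L by (simp add: mult_le_cancel_left1)
    have s1: "\<bar>s c\<bar> \<le> 1" using sr \<rho>le \<rho>L by linarith
    define v where "v y = \<kappa> c * y + z c * y\<^sup>2 + (\<Sum>i\<in>UNIV. a c $ i * K i y)" for y
    define R where "R y = (1 + s c) * exp (v y) - 1 - s c - v y" for y
    have fx: "expfam (A c) (\<kappa> c) (\<zeta> c) (a c) K y = std_normal_density y * ((1 + s c) * exp (v y))" for y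
    proof -
      have "\<kappa> c * y + \<zeta> c * y\<^sup>2 + (\<Sum>i\<in>UNIV. a c $ i * K i y) = - y\<^sup>2 / 2 + v y"
        by (simp add: v_def z_def algebra_simps)
      then have "exp (\<kappa> c * y + \<zeta> c * y\<^sup>2 + (\<Sum>i\<in>UNIV. a c $ i * K i y)) = exp (- y\<^sup>2 / 2 + v y)"
        by (simp only:)
      also have "\<dots> = exp (- y\<^sup>2 / 2) * exp (v y)" by (rule exp_add)
      finally have "exp (\<kappa> c * y + \<zeta> c * y\<^sup>2 + (\<Sum>i\<in>UNIV. a c $ i * K i y)) = exp (- y\<^sup>2 / 2) * exp (v y)" .
      then show ?thesis unfolding expfam_def std_normal_density_def s_def by (simp add: field_simps)
    qed
    have fe: "expfam (A c) (\<kappa> c) (\<zeta> c) (a c) K = (\<lambda>y. std_normal_density y * ((1 + s c) * exp (v y)))"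
      by (rule ext) (rule fx)
    have \<sigma>b: "\<bar>s c\<bar> + \<bar>\<kappa> c\<bar> + \<bar>z c\<bar> + (\<Sum>i\<in>UNIV. \<bar>a c $ i - c $ i\<bar>) \<le> (4 + N) * CE * (\<rho> c)\<^sup>2"
    proof -
      have "\<bar>s c\<bar> + \<bar>\<kappa> c\<bar> + \<bar>z c\<bar> + (\<Sum>i\<in>UNIV. \<bar>a c $ i - c $ i\<bar>)
        \<le> (4 + real CARD('i)) * (2 * L^3 * (LINT x|lborel. std_normal_density x * ((1 + x\<^sup>2) ^ 3 * exp (1/8 * (1 + x\<^sup>2))))) * (\<rho> c)\<^sup>2"
      proof (rule param_est[OF Km Kb L K_orthonormal K_orth_poly, where v=v and R=R])
        show "v y = \<kappa> c * y + z c * y\<^sup>2 + (\<Sum>i\<in>UNIV. a c $ i * K i y)" for y by (simp add: v_def)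
        show "R y = (1 + s c) * exp (v y) - 1 - s c - v y" for y by (simp add: R_def)
        show "\<rho> c = \<bar>s c\<bar> + \<bar>\<kappa> c\<bar> + \<bar>z c\<bar> + (\<Sum>i\<in>UNIV. \<bar>a c $ i\<bar>)" by (simp add: \<rho>_def)
        show "\<rho> c * L \<le> 1/8" using \<rho>L by simp
        show "\<bar>s c\<bar> \<le> 1" by (rule s1)
        show "integrable lborel (\<lambda>x. std_normal_density x * ((1 + s c) * exp (v x) * 1))"
          using dens_int[OF cU] unfolding fe by simp
        show "(LINT x|lborel. std_normal_density x * ((1 + s c) * exp (v x) * 1)) = 1"
          using dens_int[OF cU] unfolding fe by simp
        show "integrable lborel (\<lambda>x. std_normal_density x * ((1 + s c) * exp (v x) * x))"
          using mean0[OF cU] unfolding fe by (simp add: mult_ac)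
        show "(LINT x|lborel. std_normal_density x * ((1 + s c) * exp (v x) * x)) = 0"
          using mean0[OF cU] unfolding fe by (simp add: mult_ac)
        show "integrable lborel (\<lambda>x. std_normal_density x * ((1 + s c) * exp (v x) * x\<^sup>2))"
          using var1[OF cU] unfolding fe by (simp add: mult_ac)
        show "(LINT x|lborel. std_normal_density x * ((1 + s c) * exp (v x) * x\<^sup>2)) = 1"
          using var1[OF cU] unfolding fe by (simp add: mult_ac)
        show "integrable lborel (\<lambda>x. std_normal_density x * ((1 + s c) * exp (v x) * K j x))" for j
          using moments[OF cU, of j] unfolding fe by (simp add: mult_ac)
        show "(LINT x|lborel. std_normal_density x * ((1 + s c) * exp (v x) * K j x)) = c $ j" for j
          using moments[OF cU, of j] unfolding fe by (simp add: mult_ac)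
      qed
      then show ?thesis by (simp add: CE_def J_def N_def)
    qed
    define \<sigma> where "\<sigma> = \<bar>s c\<bar> + \<bar>\<kappa> c\<bar> + \<bar>z c\<bar> + (\<Sum>i\<in>UNIV. \<bar>a c $ i - c $ i\<bar>)"
    have \<sigma>0: "\<sigma> \<ge> 0" unfolding \<sigma>_def by (intro add_nonneg_nonneg sum_nonneg) auto
    have vb: "\<bar>v x\<bar> \<le> \<rho> c * L * (1 + x\<^sup>2)" unfolding v_def \<rho>_def by (rule v_bound[OF Kb L])
    have pw: "\<bar>exp (\<delta> * x\<^sup>2) * (std_normal_density x * ((1 + s c) * exp (v x)) - expfam_lin c K x)\<bar>
     \<le> exp (\<delta> * x\<^sup>2) * std_normal_density x * ((1 + x\<^sup>2)\<^sup>2 * exp (\<eta> * x\<^sup>2)) * (\<sigma> * L + 2 * L\<^sup>2 * (\<rho> c)\<^sup>2 * exp \<eta>)"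
      by (rule final_pw[OF Kb L _ vb _ s1 sr \<sigma>_def]) (use \<rho>L in \<open>auto simp: v_def\<close>)
    have sb: "exp (\<delta> * x\<^sup>2) * std_normal_density x * ((1 + x\<^sup>2)\<^sup>2 * exp (\<eta> * x\<^sup>2)) \<le> Mb"
      unfolding Mb_def by (rule sup_bound[OF \<eta>0 \<eta>d])
    have \<rho>2: "(\<rho> c)\<^sup>2 \<le> M\<rho>\<^sup>2 * (norm c)\<^sup>2"
      using power_mono[OF \<rho>c \<rho>0, of 2] by (simp add: power_mult_distrib)
    have f2: "\<sigma> * L + 2 * L\<^sup>2 * (\<rho> c)\<^sup>2 * exp \<eta>
        \<le> ((4 + N) * CE * L * M\<rho>\<^sup>2 + 2 * L\<^sup>2 * M\<rho>\<^sup>2 * exp \<eta>) * (norm c)\<^sup>2"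
    proof -
      have N0: "N \<ge> 0" by (simp add: N_def)
      have "\<sigma> * L \<le> ((4 + N) * CE * (\<rho> c)\<^sup>2) * L"
        using \<sigma>b L unfolding \<sigma>_def by (intro mult_right_mono) auto
      also have "\<dots> \<le> ((4 + N) * CE * (M\<rho>\<^sup>2 * (norm c)\<^sup>2)) * L"
        using \<rho>2 CE0 N0 L by (intro mult_right_mono mult_left_mono) auto
      finally have t1: "\<sigma> * L \<le> ((4 + N) * CE * (M\<rho>\<^sup>2 * (norm c)\<^sup>2)) * L" .
      have t2: "2 * L\<^sup>2 * (\<rho> c)\<^sup>2 * exp \<eta> \<le> 2 * L\<^sup>2 * (M\<rho>\<^sup>2 * (norm c)\<^sup>2) * exp \<eta>"
        using \<rho>2 by (intro mult_right_mono mult_left_mono) auto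
      have eq: "((4 + N) * CE * L * M\<rho>\<^sup>2 + 2 * L\<^sup>2 * M\<rho>\<^sup>2 * exp \<eta>) * (norm c)\<^sup>2
         = ((4 + N) * CE * (M\<rho>\<^sup>2 * (norm c)\<^sup>2)) * L + 2 * L\<^sup>2 * (M\<rho>\<^sup>2 * (norm c)\<^sup>2) * exp \<eta>"
        by (simp add: algebra_simps)
      show ?thesis unfolding eq using t1 t2 by linarith
    qed
    have F0: "0 \<le> exp (\<delta> * x\<^sup>2) * std_normal_density x * ((1 + x\<^sup>2)\<^sup>2 * exp (\<eta> * x\<^sup>2))" by simp
    have "\<bar>exp (\<delta> * x\<^sup>2) * (expfam (A c) (\<kappa> c) (\<zeta> c) (a c) K x - expfam_lin c K x)\<bar>
      \<le> exp (\<delta> * x\<^sup>2) * std_normal_density x * ((1 + x\<^sup>2)\<^sup>2 * exp (\<eta> * x\<^sup>2)) * (\<sigma> * L + 2 * L\<^sup>2 * (\<rho> c)\<^sup>2 * exp \<eta>)"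
      using pw unfolding fx .
    also have "\<dots> \<le> Mb * (((4 + N) * CE * L * M\<rho>\<^sup>2 + 2 * L\<^sup>2 * M\<rho>\<^sup>2 * exp \<eta>) * (norm c)\<^sup>2)"
      using sb f2 F0 \<sigma>0 L by (intro mult_mono) (auto intro: order_trans[OF F0 sb])
    also have "\<dots> = C * (norm c)\<^sup>2" by (simp add: C_def)
    finally show "\<bar>exp (\<delta> * x\<^sup>2) * (expfam (A c) (\<kappa> c) (\<zeta> c) (a c) K x - expfam_lin c K x)\<bar> \<le> C * (norm c)\<^sup>2" .
  qed
qed

end
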